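(* Let $\beta_1,\beta_2>0$, $\tau\in(0,1)$, and suppose $(\bar x,\bar y)\in X\times\mathbb{R}^m$ satisfies $f(\bar x;\beta_2)\le d(\bar y;\beta_1)$, and that $$\beta_1\beta_2\ge\frac{2\tau^2}{1-\tau}\max_{i=1,2}\frac{\|A_i\|^2}{\sigma_i}.$$ (a) (Primal step.) Define $\hat x:=(1-\tau)\bar x+\tau x^*(\bar y;\beta_1)$, $\bar y^+:=(1-\tau)\bar y+\tau y^*(\hat x;\beta_2)$, $\bar x^+:=P(\hat x;\beta_2)$ and $\beta_1^+:=(1-\tau)\beta_1$. Then $(\bar x^+,\bar y^+)\in X\times\mathbb{R}^m$ and $f(\bar x^+;\beta_2)\le d(\bar y^+;\beta_1^+)$. (b) (Dual step.) Define $\hat y:=(1-\tau)\bar y+\tau y^*(\bar x;\beta_2)$, $\bar x^+:=(1-\tau)\bar x+\tau x^*(\hat y;\beta_1)$, $\bar y^+:=G(\hat y;\beta_1)$ and $\beta_2^+:=(1-\tau)\beta_2$. Then $(\bar x^+,\bar y^+)\in X\times\mathbb{R}^m$ and $f(\bar x^+;\beta_2^+)\le d(\bar y^+;\beta_1)$.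
   Context: All spaces carry the Euclidean inner product and norm $\|\cdot\|$; for a matrix, $\|\cdot\|$ is the induced operator norm. For $i=1,2$: $X_i\subset\mathbb{R}^{n_i}$ is nonempty, closed, convex and bounded; $\phi_i:\mathbb{R}^{n_i}\to\mathbb{R}$ is convex; $A_i\in\mathbb{R}^{m\times n_i}$; $b\in\mathbb{R}^m$. Write $x=(x_1,x_2)$, $X=X_1\times X_2$, $A=[A_1,A_2]$ (so $Ax=A_1x_1+A_2x_2$), $\phi(x)=\phi_1(x_1)+\phi_2(x_2)$. For $i=1,2$, $p_i$ is a prox-function of $X_i$: continuous and strongly convex on $X_i$ with convexity parameter $\sigma_i>0$, with prox-center $x_i^c=\arg\min_{x_i\in X_i}p_i(x_i)$ normalized so $p_i(x_i^c)=0$. For $\beta_1>0$, $d(y;\beta_1):=\min_{x\in X}\{\phi(x)+y^T(Ax-b)+\beta_1(p_1(x_1)+p_2(x_2))\}$, whose (unique) minimizer is denoted $x^*(y;\beta_1)$. With $L^d(\beta_1):=\frac{1}{\beta_1}\big(\frac{\|A_1\|^2}{\sigma_1}+\frac{\|A_2\|^2}{\sigma_2}\big)$, the gradient mapping is $G(\hat y;\beta_1):=\hat y+\frac{1}{L^d(\beta_1)}(Ax^*(\hat y;\beta_1)-b)$. For $\beta_2>0$, $y^*(x;\beta_2):=\frac{1}{\beta_2}(Ax-b)$ and $f(x;\beta_2):=\phi(x)+\frac{1}{2\beta_2}\|Ax-b\|^2$. With $L_i^\psi(\beta_2):=\frac{2\|A_i\|^2}{\beta_2}$, the proximal mapping is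 $P_i(\hat x;\beta_2):=\arg\min_{x_i\in X_i}\{\phi_i(x_i)+y^*(\hat x;\beta_2)^TA_i(x_i-\hat x_i)+\frac{L_i^\psi(\beta_2)}{2}\|x_i-\hat x_i\|^2\}$ for $\hat x=(\hat x_1,\hat x_2)$, and $P(\hat x;\beta_2):=(P_1(\hat x;\beta_2),P_2(\hat x;\beta_2))$. *)

theory Defs
  imports "HOL-Analysis.Analysis"
begin

definition strongly_convex_on :: "'a::real_normed_vector set \<Rightarrow> real \<Rightarrow> ('a \<Rightarrow> real) \<Rightarrow> bool" where
  "strongly_convex_on S \<sigma> p \<longleftrightarrow>
     (\<forall>x\<in>S. \<forall>y\<in>S. \<forall>t\<in>{0..1}.
        p ((1 - t) *\<^sub>R x + t *\<^sub>R y) \<le> (1 - t) * p x + t * p y - \<sigma> / 2 * t * (1 - t) * (norm (x - y))\<^sup>2)"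

definition prox_function :: "'a::real_normed_vector set \<Rightarrow> real \<Rightarrow> ('a \<Rightarrow> real) \<Rightarrow> bool" where
  "prox_function X \<sigma> p \<longleftrightarrow> continuous_on X p \<and> \<sigma> > 0 \<and> strongly_convex_on X \<sigma> p \<and>
     (\<exists>c\<in>X. p c = 0 \<and> (\<forall>x\<in>X. p c \<le> p x))"

definition opnorm :: "real^'n^'m \<Rightarrow> real" where
  "opnorm M = onorm (\<lambda>v. M *v v)"

definition dobj where
  "dobj \<phi>1 \<phi>2 A1 A2 b p1 p2 y \<beta>1 x =
     \<phi>1 (fst x) + \<phi>2 (snd x) + y \<bullet> (A1 *v fst x + A2 *v snd x - b) + \<beta>1 * (p1 (fst x) + p2 (snd x))"

definition dfun where
  "dfun \<phi>1 \<phi>2 A1 A2 b X1 X2 p1 p2 y \<beta>1 =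
     Inf (dobj \<phi>1 \<phi>2 A1 A2 b p1 p2 y \<beta>1 ` (X1 \<times> X2))"

definition xstar where
  "xstar \<phi>1 \<phi>2 A1 A2 b X1 X2 p1 p2 y \<beta>1 =
     (SOME x. x \<in> X1 \<times> X2 \<and> (\<forall>z\<in>X1 \<times> X2.
        dobj \<phi>1 \<phi>2 A1 A2 b p1 p2 y \<beta>1 x \<le> dobj \<phi>1 \<phi>2 A1 A2 b p1 p2 y \<beta>1 z))"

definition Ld :: "real^'n1^'m \<Rightarrow> real^'n2^'m \<Rightarrow> real \<Rightarrow> real \<Rightarrow> real \<Rightarrow> real" where
  "Ld A1 A2 \<sigma>1 \<sigma>2 \<beta>1 = (1 / \<beta>1) * ((opnorm A1)\<^sup>2 / \<sigma>1 + (opnorm A2)\<^sup>2 / \<sigma>2)"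

definition Gmap where
  "Gmap \<phi>1 \<phi>2 A1 A2 b X1 X2 p1 p2 \<sigma>1 \<sigma>2 yh \<beta>1 =
     (let x = xstar \<phi>1 \<phi>2 A1 A2 b X1 X2 p1 p2 yh \<beta>1 in
      yh + (1 / Ld A1 A2 \<sigma>1 \<sigma>2 \<beta>1) *\<^sub>R (A1 *v fst x + A2 *v snd x - b))"

definition ystar where
  "ystar A1 A2 b x \<beta>2 = (1 / \<beta>2) *\<^sub>R (A1 *v fst x + A2 *v snd x - b)"

definition ffun where
  "ffun \<phi>1 \<phi>2 A1 A2 b x \<beta>2 =
     \<phi>1 (fst x) + \<phi>2 (snd x) + 1 / (2 * \<beta>2) * (norm (A1 *v fst x + A2 *v snd x - b))\<^sup>2"

definition P1 where
  "P1 \<phi>1 A1 A2 b X1 xh \<beta>2 =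
     (SOME z. z \<in> X1 \<and> (\<forall>w\<in>X1.
        \<phi>1 z + ystar A1 A2 b xh \<beta>2 \<bullet> (A1 *v (z - fst xh)) + (2 * (opnorm A1)\<^sup>2 / \<beta>2) / 2 * (norm (z - fst xh))\<^sup>2
        \<le> \<phi>1 w + ystar A1 A2 b xh \<beta>2 \<bullet> (A1 *v (w - fst xh)) + (2 * (opnorm A1)\<^sup>2 / \<beta>2) / 2 * (norm (w - fst xh))\<^sup>2))"

definition P2 where
  "P2 \<phi>2 A1 A2 b X2 xh \<beta>2 =
     (SOME z. z \<in> X2 \<and> (\<forall>w\<in>X2.
        \<phi>2 z + ystar A1 A2 b xh \<beta>2 \<bullet> (A2 *v (z - snd xh)) + (2 * (opnorm A2)\<^sup>2 / \<beta>2) / 2 * (norm (z - snd xh))\<^sup>2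
        \<le> \<phi>2 w + ystar A1 A2 b xh \<beta>2 \<bullet> (A2 *v (w - snd xh)) + (2 * (opnorm A2)\<^sup>2 / \<beta>2) / 2 * (norm (w - snd xh))\<^sup>2))"

definition Pmap where
  "Pmap \<phi>1 \<phi>2 A1 A2 b X1 X2 xh \<beta>2 = (P1 \<phi>1 A1 A2 b X1 xh \<beta>2, P2 \<phi>2 A1 A2 b X2 xh \<beta>2)"

end

theory Submission
  imports Defs
begin

lemma opn_bound: "norm (A *v v) \<le> opnorm A * norm v"
  unfolding opnorm_def by (rule onorm) simp

lemma opn_nonneg: "0 \<le> opnorm A"
  unfolding opnorm_def by (rule onorm_pos_le) simp

lemma opn_pos: "A \<noteq> 0 \<Longrightarrow> 0 < opnorm A"
  unfolding opnorm_def by (subst onorm_pos_lt) (auto simp: matrix_eq)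

lemma growth_aux:
  fixes D Q :: real
  assumes "Q \<ge> 0" "\<And>t. 0 < t \<Longrightarrow> t \<le> 1 \<Longrightarrow> t * (1 - t) * Q \<le> t * D"
  shows "Q \<le> D"
proof (rule ccontr)
  assume "\<not> Q \<le> D"
  hence QD: "D < Q" by simp
  have "0 \<le> D" using assms(2)[of 1] by simp
  hence Qp: "Q > 0" using QD by simp
  define t where "t = (Q - D) / (2 * Q)"
  have t0: "0 < t" using QD Qp by (simp add: t_def)
  have t1: "t \<le> 1" using QD Qp \<open>0 \<le> D\<close> by (simp add: t_def field_simps)
  have "t * (1 - t) * Q \<le> t * D" by (rule assms(2)[OF t0 t1])
  hence "(1 - t) * Q \<le> D" using t0 by (simp add: mult.assoc)
  moreover have "(1 - t) * Q = (Q + D) / 2" using Qp by (simp add: t_def field_simps)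
  ultimately show False using QD by simp
qed

lemma V1:
  fixes a c :: "'a::real_inner"
  shows "(norm c)\<^sup>2 + 2 * (c \<bullet> (a - c)) \<le> (norm a)\<^sup>2"
proof -
  have "0 \<le> (norm (a - c))\<^sup>2" by simp
  then show ?thesis
    by (simp add: power2_norm_eq_inner inner_diff_left inner_diff_right inner_commute algebra_simps)
qed

lemma V2:
  fixes c u v :: "'a::real_inner"
  shows "(norm (c + u + v))\<^sup>2 \<le> (norm c)\<^sup>2 + 2 * (c \<bullet> u) + 2 * (c \<bullet> v) + 2 * (norm u)\<^sup>2 + 2 * (norm v)\<^sup>2"
proof -
  have "0 \<le> (norm (u - v))\<^sup>2" by simp
  then show ?thesis
    by (simp add: power2_norm_eq_inner inner_diff_left inner_diff_right inner_add_left inner_add_right inner_commute algebra_simps)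
qed

lemma V3:
  fixes R S :: "'a::real_inner"
  shows "(norm (a *\<^sub>R R + c *\<^sub>R S))\<^sup>2 = a\<^sup>2 * (norm R)\<^sup>2 + 2 * a * c * (R \<bullet> S) + c\<^sup>2 * (norm S)\<^sup>2"
  unfolding power2_norm_eq_inner
  by (simp add: inner_add_left inner_add_right inner_commute algebra_simps power2_eq_square)

lemma opn_sq: "(norm (A *v v))\<^sup>2 \<le> (opnorm A)\<^sup>2 * (norm v)\<^sup>2"
proof -
  have "(norm (A *v v))\<^sup>2 \<le> (opnorm A * norm v)\<^sup>2"
    by (rule power_mono[OF opn_bound]) simp
  then show ?thesis by (simp add: power_mult_distrib)
qed

lemma quad:
  fixes k s a d :: real
  assumes "k > 0"
  shows "s * a * d \<le> k / 2 * d\<^sup>2 + s\<^sup>2 * a\<^sup>2 / (2 * k)"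
proof -
  have eq: "k / 2 * d\<^sup>2 + s\<^sup>2 * a\<^sup>2 / (2 * k) - s * a * d = (k * d - s * a)\<^sup>2 / (2 * k)"
    using assms by (simp add: field_simps power2_eq_square)
  have "0 \<le> (k * d - s * a)\<^sup>2 / (2 * k)" using assms by simp
  then show ?thesis using eq by linarith
qed

locale setting =
  fixes X1 :: "(real^'n1) set" and X2 :: "(real^'n2) set"
    and \<phi>1 :: "real^'n1 \<Rightarrow> real" and \<phi>2 :: "real^'n2 \<Rightarrow> real"
    and A1 :: "real^'n1^'m" and A2 :: "real^'n2^'m" and b :: "real^'m"
    and p1 :: "real^'n1 \<Rightarrow> real" and p2 :: "real^'n2 \<Rightarrow> real"
    and \<sigma>1 \<sigma>2 :: real
  assumes X1: "X1 \<noteq> {}" "closed X1" "convex X1" "bounded X1"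
    and X2: "X2 \<noteq> {}" "closed X2" "convex X2" "bounded X2"
    and phi: "convex_on UNIV \<phi>1" "convex_on UNIV \<phi>2"
    and prox: "prox_function X1 \<sigma>1 p1" "prox_function X2 \<sigma>2 p2"
begin

abbreviation "rr x \<equiv> A1 *v fst x + A2 *v snd x - b"
abbreviation "obj y \<beta> x \<equiv> dobj \<phi>1 \<phi>2 A1 A2 b p1 p2 y \<beta> x"
abbreviation "dd y \<beta> \<equiv> dfun \<phi>1 \<phi>2 A1 A2 b X1 X2 p1 p2 y \<beta>"
abbreviation "xs y \<beta> \<equiv> xstar \<phi>1 \<phi>2 A1 A2 b X1 X2 p1 p2 y \<beta>"
abbreviation "ff x \<beta> \<equiv> ffun \<phi>1 \<phi>2 A1 A2 b x \<beta>"

lemma cphi1: "continuous_on S \<phi>1"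
  using convex_on_continuous[OF open_UNIV phi(1)] continuous_on_subset by blast
lemma cphi2: "continuous_on S \<phi>2"
  using convex_on_continuous[OF open_UNIV phi(2)] continuous_on_subset by blast
lemma cp1: "continuous_on X1 p1" using prox(1) by (simp add: prox_function_def)
lemma cp2: "continuous_on X2 p2" using prox(2) by (simp add: prox_function_def)
lemma sig: "\<sigma>1 > 0" "\<sigma>2 > 0" using prox by (auto simp: prox_function_def)
lemma sc1: "strongly_convex_on X1 \<sigma>1 p1" using prox(1) by (simp add: prox_function_def)
lemma sc2: "strongly_convex_on X2 \<sigma>2 p2" using prox(2) by (simp add: prox_function_def)
lemma pnn1: "x \<in> X1 \<Longrightarrow> 0 \<le> p1 x" using prox(1) unfolding prox_function_def by force
lemma pnn2: "x \<in> X2 \<Longrightarrow> 0 \<le> p2 x" using prox(2) unfolding prox_function_def by force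

lemma cX1: "compact X1" using X1 by (simp add: compact_eq_bounded_closed)
lemma cX2: "compact X2" using X2 by (simp add: compact_eq_bounded_closed)
lemma cX: "compact (X1 \<times> X2)" using cX1 cX2 by (rule compact_Times)
lemma cvX: "convex (X1 \<times> X2)" using X1 X2 by (simp add: convex_Times)

lemma cont_obj: "continuous_on (X1 \<times> X2) (obj y \<beta>)"
proof -
  have a: "continuous_on (X1 \<times> X2) (\<lambda>x. p1 (fst x))"
    by (rule continuous_on_compose2[OF cp1 continuous_on_fst]) auto
  have c: "continuous_on (X1 \<times> X2) (\<lambda>x. p2 (snd x))"
    by (rule continuous_on_compose2[OF cp2 continuous_on_snd]) auto
  have d: "continuous_on (X1 \<times> X2) (\<lambda>x. \<phi>1 (fst x))"
    by (rule continuous_on_compose2[OF cphi1 continuous_on_fst]) auto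
  have e: "continuous_on (X1 \<times> X2) (\<lambda>x. \<phi>2 (snd x))"
    by (rule continuous_on_compose2[OF cphi2 continuous_on_snd]) auto
  show ?thesis unfolding dobj_def
    by (intro continuous_intros a c d e bounded_linear.continuous_on[OF matrix_vector_mul_bounded_linear])
qed

lemma xs_prop: "xs y \<beta> \<in> X1 \<times> X2 \<and> (\<forall>z\<in>X1 \<times> X2. obj y \<beta> (xs y \<beta>) \<le> obj y \<beta> z)"
proof -
  have "\<exists>x\<in>X1 \<times> X2. \<forall>z\<in>X1 \<times> X2. obj y \<beta> x \<le> obj y \<beta> z"
    by (rule continuous_attains_inf[OF cX _ cont_obj]) (use X1 X2 in auto)
  then obtain x0 where "x0 \<in> X1 \<times> X2 \<and> (\<forall>z\<in>X1 \<times> X2. obj y \<beta> x0 \<le> obj y \<beta> z)" by blast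
  then show ?thesis unfolding xstar_def by (rule someI)
qed

lemma dd_eq: "dd y \<beta> = obj y \<beta> (xs y \<beta>)"
  unfolding dfun_def using xs_prop[of y \<beta>] by (intro cInf_eq_minimum) auto

lemma rr_comb: "rr ((1 - t) *\<^sub>R x + t *\<^sub>R z) = (1 - t) *\<^sub>R rr x + t *\<^sub>R rr z"
proof -
  have "b = (1 - t) *\<^sub>R b + t *\<^sub>R b" by (simp add: scaleR_left_distrib[symmetric])
  then show ?thesis by (simp add: algebra_simps)
qed

lemma phi_conv:
  assumes "0 \<le> t" "t \<le> 1"
  shows "\<phi>1 (fst ((1 - t) *\<^sub>R x + t *\<^sub>R z)) + \<phi>2 (snd ((1 - t) *\<^sub>R x + t *\<^sub>R z))
    \<le> (1 - t) * (\<phi>1 (fst x) + \<phi>2 (snd x)) + t * (\<phi>1 (fst z) + \<phi>2 (snd z))"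
proof -
  have "\<phi>1 ((1 - t) *\<^sub>R fst x + t *\<^sub>R fst z) \<le> (1 - t) * \<phi>1 (fst x) + t * \<phi>1 (fst z)"
    using convex_onD[OF phi(1)] assms by blast
  moreover have "\<phi>2 ((1 - t) *\<^sub>R snd x + t *\<^sub>R snd z) \<le> (1 - t) * \<phi>2 (snd x) + t * \<phi>2 (snd z)"
    using convex_onD[OF phi(2)] assms by blast
  ultimately show ?thesis by (simp add: algebra_simps)
qed

lemma obj_conv:
  assumes x: "x \<in> X1 \<times> X2" and z: "z \<in> X1 \<times> X2" and t: "0 \<le> t" "t \<le> 1" and be: "\<beta> \<ge> 0"
  shows "obj y \<beta> ((1 - t) *\<^sub>R x + t *\<^sub>R z) \<le> (1 - t) * obj y \<beta> x + t * obj y \<beta> z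
     - t * (1 - t) * (\<beta> / 2 * (\<sigma>1 * (norm (fst x - fst z))\<^sup>2 + \<sigma>2 * (norm (snd x - snd z))\<^sup>2))"
proof -
  have h1: "p1 ((1 - t) *\<^sub>R fst x + t *\<^sub>R fst z) \<le> (1 - t) * p1 (fst x) + t * p1 (fst z)
      - \<sigma>1 / 2 * t * (1 - t) * (norm (fst x - fst z))\<^sup>2"
    using sc1 x z t unfolding strongly_convex_on_def by auto
  have h2: "p2 ((1 - t) *\<^sub>R snd x + t *\<^sub>R snd z) \<le> (1 - t) * p2 (snd x) + t * p2 (snd z)
      - \<sigma>2 / 2 * t * (1 - t) * (norm (snd x - snd z))\<^sup>2"
    using sc2 x z t unfolding strongly_convex_on_def by auto
  have hp: "\<beta> * (p1 ((1 - t) *\<^sub>R fst x + t *\<^sub>R fst z) + p2 ((1 - t) *\<^sub>R snd x + t *\<^sub>R snd z))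
     \<le> \<beta> * ((1 - t) * p1 (fst x) + t * p1 (fst z)
      - \<sigma>1 / 2 * t * (1 - t) * (norm (fst x - fst z))\<^sup>2 + ((1 - t) * p2 (snd x) + t * p2 (snd z)
      - \<sigma>2 / 2 * t * (1 - t) * (norm (snd x - snd z))\<^sup>2))"
    using h1 h2 be by (intro mult_left_mono) auto
  have hl: "y \<bullet> rr ((1 - t) *\<^sub>R x + t *\<^sub>R z) = (1 - t) * (y \<bullet> rr x) + t * (y \<bullet> rr z)"
    by (simp only: rr_comb inner_add_right inner_scaleR_right)
  note hphi = phi_conv[OF t, of x z]
  show ?thesis using hp hl hphi unfolding dobj_def by (simp add: algebra_simps)
qed

lemma growth:
  assumes z: "z \<in> X1 \<times> X2" and be: "\<beta> \<ge> 0"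
  shows "obj y \<beta> z \<ge> dd y \<beta> + \<beta> / 2 * (\<sigma>1 * (norm (fst (xs y \<beta>) - fst z))\<^sup>2 + \<sigma>2 * (norm (snd (xs y \<beta>) - snd z))\<^sup>2)"
proof -
  let ?x = "xs y \<beta>"
  let ?Q = "\<beta> / 2 * (\<sigma>1 * (norm (fst ?x - fst z))\<^sup>2 + \<sigma>2 * (norm (snd ?x - snd z))\<^sup>2)"
  have xX: "?x \<in> X1 \<times> X2" and mn: "\<forall>w\<in>X1 \<times> X2. obj y \<beta> ?x \<le> obj y \<beta> w" using xs_prop by auto
  have "?Q \<le> obj y \<beta> z - obj y \<beta> ?x"
  proof (rule growth_aux)
    show "0 \<le> ?Q" using be sig by auto
    fix t :: real assume t: "0 < t" "t \<le> 1"
    have wX: "(1 - t) *\<^sub>R ?x + t *\<^sub>R z \<in> X1 \<times> X2"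
      using cvX xX z t unfolding convex_alt by auto
    have "obj y \<beta> ?x \<le> obj y \<beta> ((1 - t) *\<^sub>R ?x + t *\<^sub>R z)" by (rule mn[rule_format, OF wX])
    also have "\<dots> \<le> (1 - t) * obj y \<beta> ?x + t * obj y \<beta> z - t * (1 - t) * ?Q"
      by (rule obj_conv[OF xX z _ t(2) be]) (use t in auto)
    finally show "t * (1 - t) * ?Q \<le> t * (obj y \<beta> z - obj y \<beta> ?x)" by (simp add: algebra_simps)
  qed
  then show ?thesis using dd_eq by simp
qed

lemma P1_prop:
  "P1 \<phi>1 A1 A2 b X1 xh \<beta>2 \<in> X1 \<and> (\<forall>w\<in>X1.
        \<phi>1 (P1 \<phi>1 A1 A2 b X1 xh \<beta>2) + ystar A1 A2 b xh \<beta>2 \<bullet> (A1 *v (P1 \<phi>1 A1 A2 b X1 xh \<beta>2 - fst xh)) + (2 * (opnorm A1)\<^sup>2 / \<beta>2) / 2 * (norm (P1 \<phi>1 A1 A2 b X1 xh \<beta>2 - fst xh))\<^sup>2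
        \<le> \<phi>1 w + ystar A1 A2 b xh \<beta>2 \<bullet> (A1 *v (w - fst xh)) + (2 * (opnorm A1)\<^sup>2 / \<beta>2) / 2 * (norm (w - fst xh))\<^sup>2)"
proof -
  have "\<exists>x\<in>X1. \<forall>w\<in>X1. (\<lambda>z. \<phi>1 z + ystar A1 A2 b xh \<beta>2 \<bullet> (A1 *v (z - fst xh)) + (2 * (opnorm A1)\<^sup>2 / \<beta>2) / 2 * (norm (z - fst xh))\<^sup>2) x
     \<le> (\<lambda>z. \<phi>1 z + ystar A1 A2 b xh \<beta>2 \<bullet> (A1 *v (z - fst xh)) + (2 * (opnorm A1)\<^sup>2 / \<beta>2) / 2 * (norm (z - fst xh))\<^sup>2) w"
    by (rule continuous_attains_inf[OF cX1 X1(1)])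
       (intro continuous_intros cphi1 bounded_linear.continuous_on[OF matrix_vector_mul_bounded_linear])
  then obtain x0 where "x0 \<in> X1 \<and> (\<forall>w\<in>X1. \<phi>1 x0 + ystar A1 A2 b xh \<beta>2 \<bullet> (A1 *v (x0 - fst xh)) + (2 * (opnorm A1)\<^sup>2 / \<beta>2) / 2 * (norm (x0 - fst xh))\<^sup>2
        \<le> \<phi>1 w + ystar A1 A2 b xh \<beta>2 \<bullet> (A1 *v (w - fst xh)) + (2 * (opnorm A1)\<^sup>2 / \<beta>2) / 2 * (norm (w - fst xh))\<^sup>2)" by blast
  then show ?thesis unfolding P1_def by (rule someI)
qed

lemma P2_prop:
  "P2 \<phi>2 A1 A2 b X2 xh \<beta>2 \<in> X2 \<and> (\<forall>w\<in>X2.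
        \<phi>2 (P2 \<phi>2 A1 A2 b X2 xh \<beta>2) + ystar A1 A2 b xh \<beta>2 \<bullet> (A2 *v (P2 \<phi>2 A1 A2 b X2 xh \<beta>2 - snd xh)) + (2 * (opnorm A2)\<^sup>2 / \<beta>2) / 2 * (norm (P2 \<phi>2 A1 A2 b X2 xh \<beta>2 - snd xh))\<^sup>2
        \<le> \<phi>2 w + ystar A1 A2 b xh \<beta>2 \<bullet> (A2 *v (w - snd xh)) + (2 * (opnorm A2)\<^sup>2 / \<beta>2) / 2 * (norm (w - snd xh))\<^sup>2)"
proof -
  have "\<exists>x\<in>X2. \<forall>w\<in>X2. (\<lambda>z. \<phi>2 z + ystar A1 A2 b xh \<beta>2 \<bullet> (A2 *v (z - snd xh)) + (2 * (opnorm A2)\<^sup>2 / \<beta>2) / 2 * (norm (z - snd xh))\<^sup>2) x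
     \<le> (\<lambda>z. \<phi>2 z + ystar A1 A2 b xh \<beta>2 \<bullet> (A2 *v (z - snd xh)) + (2 * (opnorm A2)\<^sup>2 / \<beta>2) / 2 * (norm (z - snd xh))\<^sup>2) w"
    by (rule continuous_attains_inf[OF cX2 X2(1)])
       (intro continuous_intros cphi2 bounded_linear.continuous_on[OF matrix_vector_mul_bounded_linear])
  then obtain x0 where "x0 \<in> X2 \<and> (\<forall>w\<in>X2. \<phi>2 x0 + ystar A1 A2 b xh \<beta>2 \<bullet> (A2 *v (x0 - snd xh)) + (2 * (opnorm A2)\<^sup>2 / \<beta>2) / 2 * (norm (x0 - snd xh))\<^sup>2
        \<le> \<phi>2 w + ystar A1 A2 b xh \<beta>2 \<bullet> (A2 *v (w - snd xh)) + (2 * (opnorm A2)\<^sup>2 / \<beta>2) / 2 * (norm (w - snd xh))\<^sup>2)" by blast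
  then show ?thesis unfolding P2_def by (rule someI)
qed

lemma inX: "x \<in> X1 \<times> X2 \<Longrightarrow> z \<in> X1 \<times> X2 \<Longrightarrow> 0 \<le> t \<Longrightarrow> t \<le> 1 \<Longrightarrow> (1 - t) *\<^sub>R x + t *\<^sub>R z \<in> X1 \<times> X2"
  using cvX unfolding convex_alt by blast

lemma partA:
  assumes b1: "\<beta>1 > 0" and b2: "\<beta>2 > 0" and tau: "0 < \<tau>" "\<tau> < 1"
    and xbX: "xb \<in> X1 \<times> X2" and gap: "ff xb \<beta>2 \<le> dd yb \<beta>1"
    and c1: "2 * \<tau>\<^sup>2 * (opnorm A1)\<^sup>2 \<le> (1 - \<tau>) * \<beta>1 * \<beta>2 * \<sigma>1"
    and c2: "2 * \<tau>\<^sup>2 * (opnorm A2)\<^sup>2 \<le> (1 - \<tau>) * \<beta>1 * \<beta>2 * \<sigma>2"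
  shows "(let xh = (1 - \<tau>) *\<^sub>R xb + \<tau> *\<^sub>R xstar \<phi>1 \<phi>2 A1 A2 b X1 X2 p1 p2 yb \<beta>1;
          yp = (1 - \<tau>) *\<^sub>R yb + \<tau> *\<^sub>R ystar A1 A2 b xh \<beta>2;
          xp = Pmap \<phi>1 \<phi>2 A1 A2 b X1 X2 xh \<beta>2;
          \<beta>1p = (1 - \<tau>) * \<beta>1
      in xp \<in> X1 \<times> X2 \<and>
         ffun \<phi>1 \<phi>2 A1 A2 b xp \<beta>2 \<le> dfun \<phi>1 \<phi>2 A1 A2 b X1 X2 p1 p2 yp \<beta>1p)"
proof -
  define xst where "xst = xs yb \<beta>1"
  define xh where "xh = (1 - \<tau>) *\<^sub>R xb + \<tau> *\<^sub>R xst"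
  define rh where "rh = rr xh"
  define yst where "yst = ystar A1 A2 b xh \<beta>2"
  have yst: "yst = (1 / \<beta>2) *\<^sub>R rh" by (simp add: yst_def ystar_def rh_def)
  have ystv: "yst \<bullet> v = (rh \<bullet> v) / \<beta>2" for v by (simp add: yst)
  define yp where "yp = (1 - \<tau>) *\<^sub>R yb + \<tau> *\<^sub>R yst"
  define xp where "xp = Pmap \<phi>1 \<phi>2 A1 A2 b X1 X2 xh \<beta>2"
  define b1p where "b1p = (1 - \<tau>) * \<beta>1"
  define x' where "x' = xs yp b1p"
  have t0: "0 \<le> \<tau>" "\<tau> \<le> 1" "0 \<le> 1 - \<tau>" using tau by auto
  have xstX: "xst \<in> X1 \<times> X2" using xs_prop xst_def by blast
  have xhX: "xh \<in> X1 \<times> X2" unfolding xh_def by (rule inX[OF xbX xstX t0(1,2)])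
  have x'X: "x' \<in> X1 \<times> X2" using xs_prop x'_def by blast
  define uu where "uu = (1 - \<tau>) *\<^sub>R xb + \<tau> *\<^sub>R x'"
  have uX: "uu \<in> X1 \<times> X2" unfolding uu_def by (rule inX[OF xbX x'X t0(1,2)])
  note PP1 = P1_prop[of xh \<beta>2] and PP2 = P2_prop[of xh \<beta>2]
  have fxp: "fst xp = P1 \<phi>1 A1 A2 b X1 xh \<beta>2" "snd xp = P2 \<phi>2 A1 A2 b X2 xh \<beta>2"
    by (simp_all add: xp_def Pmap_def)
  have xpX: "xp \<in> X1 \<times> X2" using PP1 PP2 fxp by (cases xp) auto
  define ell where "ell z = (norm rh)\<^sup>2 / (2 * \<beta>2) + yst \<bullet> (rr z - rh)" for z
  define Q where "Q = \<beta>1 / 2 * (\<sigma>1 * (norm (fst xst - fst x'))\<^sup>2 + \<sigma>2 * (norm (snd xst - snd x'))\<^sup>2)"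
  define phi where "phi z = \<phi>1 (fst z) + \<phi>2 (snd z)" for z :: "(real^'n1) \<times> (real^'n2)"
  define h1 where "h1 z = \<phi>1 z + yst \<bullet> (A1 *v (z - fst xh)) + (2 * (opnorm A1)\<^sup>2 / \<beta>2) / 2 * (norm (z - fst xh))\<^sup>2" for z
  define h2 where "h2 z = \<phi>2 z + yst \<bullet> (A2 *v (z - snd xh)) + (2 * (opnorm A2)\<^sup>2 / \<beta>2) / 2 * (norm (z - snd xh))\<^sup>2" for z
  define M where "M z = (norm rh)\<^sup>2 / (2 * \<beta>2) + h1 (fst z) + h2 (snd z)" for z
  have S1: "dd yp b1p = (1 - \<tau>) * obj yb \<beta>1 x' + \<tau> * (phi x' + yst \<bullet> rr x')"
    unfolding dd_eq x'_def[symmetric] unfolding dobj_def yp_def b1p_def phi_def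
    by (simp add: inner_add_left algebra_simps)
  have S2: "obj yb \<beta>1 x' \<ge> dd yb \<beta>1 + Q"
    unfolding Q_def xst_def using growth[OF x'X, of \<beta>1 yb] b1 by simp
  have S3: "ff xb \<beta>2 \<ge> phi xb + ell xb"
  proof -
    have "(norm rh)\<^sup>2 + 2 * (rh \<bullet> (rr xb - rh)) \<le> (norm (rr xb))\<^sup>2" by (rule V1)
    hence "((norm rh)\<^sup>2 + 2 * (rh \<bullet> (rr xb - rh))) / (2 * \<beta>2) \<le> (norm (rr xb))\<^sup>2 / (2 * \<beta>2)"
      using b2 by (intro divide_right_mono) auto
    moreover have "((norm rh)\<^sup>2 + 2 * (rh \<bullet> (rr xb - rh))) / (2 * \<beta>2) = ell xb"
      unfolding ell_def ystv using b2 by (simp add: field_simps)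
    ultimately show ?thesis unfolding ffun_def phi_def by simp
  qed
  have S4: "yst \<bullet> rr x' \<ge> ell x'"
  proof -
    have "yst \<bullet> rh = (norm rh)\<^sup>2 / \<beta>2" unfolding ystv by (simp add: power2_norm_eq_inner)
    moreover have "0 \<le> (norm rh)\<^sup>2 / (2 * \<beta>2)" using b2 by simp
    ultimately show ?thesis unfolding ell_def inner_diff_right by (simp add: field_simps)
  qed
  have S5: "dd yp b1p \<ge> (1 - \<tau>) * (phi xb + ell xb + Q) + \<tau> * (phi x' + ell x')"
  proof -
    have "(1 - \<tau>) * (phi xb + ell xb + Q) \<le> (1 - \<tau>) * obj yb \<beta>1 x'"
      using S2 S3 gap t0 by (intro mult_left_mono) auto
    moreover have "\<tau> * (phi x' + ell x') \<le> \<tau> * (phi x' + yst \<bullet> rr x')"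
      using S4 t0 by (intro mult_left_mono) auto
    ultimately show ?thesis using S1 by simp
  qed
  have S6: "phi uu \<le> (1 - \<tau>) * phi xb + \<tau> * phi x'"
    unfolding phi_def uu_def by (rule phi_conv[OF t0(1,2)])
  have S7: "ell uu = (1 - \<tau>) * ell xb + \<tau> * ell x'"
  proof -
    have "rr uu - rh = (1 - \<tau>) *\<^sub>R (rr xb - rh) + \<tau> *\<^sub>R (rr x' - rh)"
      unfolding uu_def rr_comb by (simp add: algebra_simps)
    hence e: "yst \<bullet> (rr uu - rh) = (1 - \<tau>) * (yst \<bullet> (rr xb - rh)) + \<tau> * (yst \<bullet> (rr x' - rh))"
      by (simp only: inner_add_right inner_scaleR_right)
    have lin: "\<And>c a b::real. (1 - \<tau>) * (c + a) + \<tau> * (c + b) = c + ((1 - \<tau>) * a + \<tau> * b)"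
      by (simp add: algebra_simps)
    show ?thesis unfolding ell_def e lin ..
  qed
  have S8: "uu - xh = \<tau> *\<^sub>R (x' - xst)" unfolding uu_def xh_def by (simp add: algebra_simps)
  have S8a: "(norm (fst uu - fst xh))\<^sup>2 = \<tau>\<^sup>2 * (norm (fst xst - fst x'))\<^sup>2"
  proof -
    have "fst uu - fst xh = \<tau> *\<^sub>R (fst x' - fst xst)" using arg_cong[OF S8, of fst] by simp
    then show ?thesis using t0 by (simp add: power_mult_distrib norm_minus_commute)
  qed
  have S8b: "(norm (snd uu - snd xh))\<^sup>2 = \<tau>\<^sup>2 * (norm (snd xst - snd x'))\<^sup>2"
  proof -
    have "snd uu - snd xh = \<tau> *\<^sub>R (snd x' - snd xst)" using arg_cong[OF S8, of snd] by simp
    then show ?thesis using t0 by (simp add: power_mult_distrib norm_minus_commute)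
  qed
  have S9: "ell z = (norm rh)\<^sup>2 / (2 * \<beta>2) + yst \<bullet> (A1 *v (fst z - fst xh)) + yst \<bullet> (A2 *v (snd z - snd xh))" for z
  proof -
    have "rr z - rh = A1 *v (fst z - fst xh) + A2 *v (snd z - snd xh)"
      unfolding rh_def by (simp add: matrix_vector_mult_diff_distrib algebra_simps)
    then show ?thesis unfolding ell_def by (simp add: inner_add_right)
  qed
  have S10: "(opnorm A1)\<^sup>2 / \<beta>2 * (norm (fst uu - fst xh))\<^sup>2 + (opnorm A2)\<^sup>2 / \<beta>2 * (norm (snd uu - snd xh))\<^sup>2 \<le> (1 - \<tau>) * Q"
  proof -
    have k1: "(opnorm A1)\<^sup>2 / \<beta>2 * \<tau>\<^sup>2 \<le> (1 - \<tau>) * \<beta>1 / 2 * \<sigma>1"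
      using c1 b2 by (simp add: field_simps)
    have k2: "(opnorm A2)\<^sup>2 / \<beta>2 * \<tau>\<^sup>2 \<le> (1 - \<tau>) * \<beta>1 / 2 * \<sigma>2"
      using c2 b2 by (simp add: field_simps)
    have "(opnorm A1)\<^sup>2 / \<beta>2 * \<tau>\<^sup>2 * (norm (fst xst - fst x'))\<^sup>2 \<le> (1 - \<tau>) * \<beta>1 / 2 * \<sigma>1 * (norm (fst xst - fst x'))\<^sup>2"
      by (rule mult_right_mono[OF k1]) simp
    moreover have "(opnorm A2)\<^sup>2 / \<beta>2 * \<tau>\<^sup>2 * (norm (snd xst - snd x'))\<^sup>2 \<le> (1 - \<tau>) * \<beta>1 / 2 * \<sigma>2 * (norm (snd xst - snd x'))\<^sup>2"
      by (rule mult_right_mono[OF k2]) simp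
    moreover have "(opnorm A1)\<^sup>2 / \<beta>2 * (norm (fst uu - fst xh))\<^sup>2 + (opnorm A2)\<^sup>2 / \<beta>2 * (norm (snd uu - snd xh))\<^sup>2
       = (opnorm A1)\<^sup>2 / \<beta>2 * \<tau>\<^sup>2 * (norm (fst xst - fst x'))\<^sup>2 + (opnorm A2)\<^sup>2 / \<beta>2 * \<tau>\<^sup>2 * (norm (snd xst - snd x'))\<^sup>2"
      unfolding S8a S8b by simp
    moreover have "(1 - \<tau>) * Q = (1 - \<tau>) * \<beta>1 / 2 * \<sigma>1 * (norm (fst xst - fst x'))\<^sup>2 + (1 - \<tau>) * \<beta>1 / 2 * \<sigma>2 * (norm (snd xst - snd x'))\<^sup>2"
      unfolding Q_def by (simp add: algebra_simps)
    ultimately show ?thesis by linarith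
  qed
  have S11: "M uu \<le> dd yp b1p"
  proof -
    have "M uu = phi uu + ell uu + ((opnorm A1)\<^sup>2 / \<beta>2 * (norm (fst uu - fst xh))\<^sup>2 + (opnorm A2)\<^sup>2 / \<beta>2 * (norm (snd uu - snd xh))\<^sup>2)"
      unfolding M_def h1_def h2_def S9 phi_def by simp
    moreover have "(1 - \<tau>) * (phi xb + ell xb + Q) + \<tau> * (phi x' + ell x') = ((1 - \<tau>) * phi xb + \<tau> * phi x') + ((1 - \<tau>) * ell xb + \<tau> * ell x') + (1 - \<tau>) * Q"
      by (simp add: algebra_simps)
    ultimately show ?thesis using S5 S6 S7 S10 by linarith
  qed
  have S12: "M xp \<le> M uu"
  proof -
    have "h1 (fst xp) \<le> h1 (fst uu)" using PP1 uX unfolding h1_def fxp yst_def by auto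
    moreover have "h2 (snd xp) \<le> h2 (snd uu)" using PP2 uX unfolding h2_def fxp yst_def by auto
    ultimately show ?thesis unfolding M_def by simp
  qed
  have S13: "ff xp \<beta>2 \<le> M xp"
  proof -
    let ?u = "A1 *v (fst xp - fst xh)" and ?v = "A2 *v (snd xp - snd xh)"
    have "rr xp = rh + ?u + ?v" unfolding rh_def by (simp add: matrix_vector_mult_diff_distrib algebra_simps)
    hence "(norm (rr xp))\<^sup>2 \<le> (norm rh)\<^sup>2 + 2 * (rh \<bullet> ?u) + 2 * (rh \<bullet> ?v) + 2 * (norm ?u)\<^sup>2 + 2 * (norm ?v)\<^sup>2"
      using V2 by metis
    also have "\<dots> \<le> (norm rh)\<^sup>2 + 2 * (rh \<bullet> ?u) + 2 * (rh \<bullet> ?v) + 2 * ((opnorm A1)\<^sup>2 * (norm (fst xp - fst xh))\<^sup>2)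
       + 2 * ((opnorm A2)\<^sup>2 * (norm (snd xp - snd xh))\<^sup>2)"
      using opn_sq[of A1 "fst xp - fst xh"] opn_sq[of A2 "snd xp - snd xh"] by linarith
    finally have "(norm (rr xp))\<^sup>2 / (2 * \<beta>2) \<le> ((norm rh)\<^sup>2 + 2 * (rh \<bullet> ?u) + 2 * (rh \<bullet> ?v) + 2 * ((opnorm A1)\<^sup>2 * (norm (fst xp - fst xh))\<^sup>2)
       + 2 * ((opnorm A2)\<^sup>2 * (norm (snd xp - snd xh))\<^sup>2)) / (2 * \<beta>2)"
      using b2 by (intro divide_right_mono) auto
    also have "\<dots> = M xp - phi xp"
      unfolding M_def h1_def h2_def ystv phi_def using b2 by (simp add: field_simps)
    finally show ?thesis unfolding ffun_def phi_def by simp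
  qed
  have "xp \<in> X1 \<times> X2 \<and> ff xp \<beta>2 \<le> dd yp b1p" using xpX S11 S12 S13 by simp
  then show ?thesis unfolding Let_def xp_def yp_def yst_def xh_def xst_def b1p_def .
qed

lemma obj_shift: "obj y' \<beta> x = obj y \<beta> x + (y' - y) \<bullet> rr x"
  unfolding dobj_def by (simp add: inner_diff_left)

lemma partB:
  assumes b1: "\<beta>1 > 0" and b2: "\<beta>2 > 0" and tau: "0 < \<tau>" "\<tau> < 1"
    and xbX: "xb \<in> X1 \<times> X2" and gap: "ff xb \<beta>2 \<le> dd yb \<beta>1"
    and A_nz: "A1 \<noteq> 0 \<or> A2 \<noteq> 0"
    and cB: "\<tau>\<^sup>2 * ((opnorm A1)\<^sup>2 / \<sigma>1 + (opnorm A2)\<^sup>2 / \<sigma>2) \<le> (1 - \<tau>) * \<beta>1 * \<beta>2"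
  shows "(let yh = (1 - \<tau>) *\<^sub>R yb + \<tau> *\<^sub>R ystar A1 A2 b xb \<beta>2;
          xp = (1 - \<tau>) *\<^sub>R xb + \<tau> *\<^sub>R xstar \<phi>1 \<phi>2 A1 A2 b X1 X2 p1 p2 yh \<beta>1;
          yp = Gmap \<phi>1 \<phi>2 A1 A2 b X1 X2 p1 p2 \<sigma>1 \<sigma>2 yh \<beta>1;
          \<beta>2p = (1 - \<tau>) * \<beta>2
      in xp \<in> X1 \<times> X2 \<and>
         ffun \<phi>1 \<phi>2 A1 A2 b xp \<beta>2p \<le> dfun \<phi>1 \<phi>2 A1 A2 b X1 X2 p1 p2 yp \<beta>1)"
proof -
  define yh where "yh = (1 - \<tau>) *\<^sub>R yb + \<tau> *\<^sub>R ystar A1 A2 b xb \<beta>2"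
  define z where "z = xs yh \<beta>1"
  define xp where "xp = (1 - \<tau>) *\<^sub>R xb + \<tau> *\<^sub>R z"
  define yp where "yp = Gmap \<phi>1 \<phi>2 A1 A2 b X1 X2 p1 p2 \<sigma>1 \<sigma>2 yh \<beta>1"
  define b2p where "b2p = (1 - \<tau>) * \<beta>2"
  define L where "L = Ld A1 A2 \<sigma>1 \<sigma>2 \<beta>1"
  define R where "R = rr xb"
  define S where "S = rr z"
  define a1 where "a1 = opnorm A1"
  define a2 where "a2 = opnorm A2"
  define phi where "phi x = \<phi>1 (fst x) + \<phi>2 (snd x)" for x :: "(real^'n1) \<times> (real^'n2)"
  have t0: "0 \<le> \<tau>" "\<tau> \<le> 1" "0 < 1 - \<tau>" using tau by auto
  have a0: "0 \<le> a1" "0 \<le> a2" unfolding a1_def a2_def by (simp_all add: opn_nonneg)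
  have apos: "0 < a1 \<or> 0 < a2"
  proof (cases "A1 = 0")
    case True
    then show ?thesis using A_nz opn_pos[of A2] unfolding a2_def by simp
  next
    case False
    then show ?thesis using opn_pos[of A1] unfolding a1_def by simp
  qed
  have sq1: "0 \<le> a1\<^sup>2 / \<sigma>1" "0 \<le> a2\<^sup>2 / \<sigma>2" using sig by simp_all
  have sum_pos: "0 < a1\<^sup>2 / \<sigma>1 + a2\<^sup>2 / \<sigma>2"
  proof (cases "0 < a1")
    case True
    then have "0 < a1\<^sup>2 / \<sigma>1" using sig by simp
    then show ?thesis using sq1 by linarith
  next
    case False
    then have "0 < a2\<^sup>2 / \<sigma>2" using sig apos by simp
    then show ?thesis using sq1 by linarith
  qed
  have L_eq: "L = (a1\<^sup>2 / \<sigma>1 + a2\<^sup>2 / \<sigma>2) / \<beta>1" unfolding L_def Ld_def a1_def a2_def by simp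
  have Lpos: "L > 0" unfolding L_eq using sum_pos b1 by simp
  have zX: "z \<in> X1 \<times> X2" and zmin: "\<forall>w\<in>X1 \<times> X2. obj yh \<beta>1 z \<le> obj yh \<beta>1 w"
    using xs_prop z_def by auto
  have xpX: "xp \<in> X1 \<times> X2" unfolding xp_def by (rule inX[OF xbX zX t0(1,2)])
  have yp: "yp = yh + (1 / L) *\<^sub>R S" unfolding yp_def Gmap_def Let_def L_def S_def z_def by simp
  have yh: "yh = (1 - \<tau>) *\<^sub>R yb + (\<tau> / \<beta>2) *\<^sub>R R" unfolding yh_def ystar_def R_def by simp
  define x2 where "x2 = xs yp \<beta>1"
  have x2X: "x2 \<in> X1 \<times> X2" using xs_prop x2_def by blast
  define d1 where "d1 = norm (fst z - fst x2)"
  define d2 where "d2 = norm (snd z - snd x2)"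
  have d0: "0 \<le> d1" "0 \<le> d2" unfolding d1_def d2_def by simp_all
  define s where "s = norm S / L"
  have B1: "dd yp \<beta>1 \<ge> dd yh \<beta>1 + (norm S)\<^sup>2 / (2 * L)"
  proof -
    have e1: "dd yp \<beta>1 = obj yh \<beta>1 x2 + (1 / L) * (S \<bullet> rr x2)"
      unfolding dd_eq x2_def[symmetric] by (subst obj_shift[of _ _ _ yh]) (simp add: yp)
    have g: "obj yh \<beta>1 x2 \<ge> dd yh \<beta>1 + \<beta>1 / 2 * (\<sigma>1 * d1\<^sup>2 + \<sigma>2 * d2\<^sup>2)"
      using growth[OF x2X, of \<beta>1 yh] b1 unfolding d1_def d2_def z_def by simp
    let ?u = "A1 *v (fst x2 - fst z)" and ?v = "A2 *v (snd x2 - snd z)"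
    have rx2: "rr x2 = S + ?u + ?v" unfolding S_def by (simp add: matrix_vector_mult_diff_distrib algebra_simps)
    have cu: "- (S \<bullet> ?u) \<le> norm S * (a1 * d1)"
    proof -
      have "- (S \<bullet> ?u) \<le> norm S * norm ?u" using norm_cauchy_schwarz[of "-S" ?u] by simp
      also have "\<dots> \<le> norm S * (a1 * d1)"
        using opn_bound[of A1 "fst x2 - fst z"] unfolding a1_def d1_def
        by (intro mult_left_mono) (auto simp: norm_minus_commute)
      finally show ?thesis .
    qed
    have cv: "- (S \<bullet> ?v) \<le> norm S * (a2 * d2)"
    proof -
      have "- (S \<bullet> ?v) \<le> norm S * norm ?v" using norm_cauchy_schwarz[of "-S" ?v] by simp
      also have "\<dots> \<le> norm S * (a2 * d2)"
        using opn_bound[of A2 "snd x2 - snd z"] unfolding a2_def d2_def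
        by (intro mult_left_mono) (auto simp: norm_minus_commute)
      finally show ?thesis .
    qed
    have SS: "S \<bullet> rr x2 \<ge> (norm S)\<^sup>2 - norm S * (a1 * d1) - norm S * (a2 * d2)"
      unfolding rx2 inner_add_right using cu cv by (simp add: power2_norm_eq_inner)
    have SS': "(1 / L) * (S \<bullet> rr x2) \<ge> (norm S)\<^sup>2 / L - s * a1 * d1 - s * a2 * d2"
    proof -
      have "(1 / L) * ((norm S)\<^sup>2 - norm S * (a1 * d1) - norm S * (a2 * d2)) \<le> (1 / L) * (S \<bullet> rr x2)"
        using SS Lpos by (intro mult_left_mono) auto
      moreover have "(1 / L) * ((norm S)\<^sup>2 - norm S * (a1 * d1) - norm S * (a2 * d2)) = (norm S)\<^sup>2 / L - s * a1 * d1 - s * a2 * d2"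
        unfolding s_def using Lpos by (simp add: field_simps)
      ultimately show ?thesis by simp
    qed
    have q1: "s * a1 * d1 \<le> (\<beta>1 * \<sigma>1) / 2 * d1\<^sup>2 + s\<^sup>2 * a1\<^sup>2 / (2 * (\<beta>1 * \<sigma>1))"
      by (rule quad) (use b1 sig in simp)
    have q2: "s * a2 * d2 \<le> (\<beta>1 * \<sigma>2) / 2 * d2\<^sup>2 + s\<^sup>2 * a2\<^sup>2 / (2 * (\<beta>1 * \<sigma>2))"
      by (rule quad) (use b1 sig in simp)
    have q3: "s\<^sup>2 * a1\<^sup>2 / (2 * (\<beta>1 * \<sigma>1)) + s\<^sup>2 * a2\<^sup>2 / (2 * (\<beta>1 * \<sigma>2)) = (norm S)\<^sup>2 / (2 * L)"
    proof -
      have "s\<^sup>2 * a1\<^sup>2 / (2 * (\<beta>1 * \<sigma>1)) + s\<^sup>2 * a2\<^sup>2 / (2 * (\<beta>1 * \<sigma>2)) = s\<^sup>2 * L / 2"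
        unfolding L_eq using b1 sig by (simp add: field_simps)
      also have "\<dots> = (norm S)\<^sup>2 / (2 * L)" unfolding s_def using Lpos by (simp add: field_simps power2_eq_square)
      finally show ?thesis .
    qed
    have q4: "\<beta>1 / 2 * (\<sigma>1 * d1\<^sup>2 + \<sigma>2 * d2\<^sup>2) = (\<beta>1 * \<sigma>1) / 2 * d1\<^sup>2 + (\<beta>1 * \<sigma>2) / 2 * d2\<^sup>2"
      by (simp add: algebra_simps)
    have q5: "(norm S)\<^sup>2 / L = (norm S)\<^sup>2 / (2 * L) + (norm S)\<^sup>2 / (2 * L)" by (simp add: field_simps)
    show ?thesis using e1 g SS' q1 q2 q3 q4 q5 by linarith
  qed
  have B2: "dd yh \<beta>1 \<ge> (1 - \<tau>) * dd yb \<beta>1 + \<tau> * (phi z + (R \<bullet> S) / \<beta>2)"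
  proof -
    have pz: "0 \<le> \<beta>1 * (p1 (fst z) + p2 (snd z))" using zX pnn1 pnn2 b1 by auto
    have ob: "dd yb \<beta>1 \<le> obj yb \<beta>1 z" unfolding dd_eq using xs_prop zX by blast
    have "obj yh \<beta>1 z = (1 - \<tau>) * obj yb \<beta>1 z + \<tau> * (phi z + (R \<bullet> S) / \<beta>2 + \<beta>1 * (p1 (fst z) + p2 (snd z)))"
      unfolding dobj_def S_def[symmetric] yh phi_def by (simp add: inner_add_left algebra_simps)
    moreover have "(1 - \<tau>) * dd yb \<beta>1 \<le> (1 - \<tau>) * obj yb \<beta>1 z" using ob t0 by (intro mult_left_mono) auto
    moreover have "\<tau> * (phi z + (R \<bullet> S) / \<beta>2) \<le> \<tau> * (phi z + (R \<bullet> S) / \<beta>2 + \<beta>1 * (p1 (fst z) + p2 (snd z)))"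
      using pz t0 by (intro mult_left_mono) auto
    ultimately show ?thesis unfolding dd_eq[of yh] z_def[symmetric] by linarith
  qed
  have B3: "dd yb \<beta>1 \<ge> phi xb + (norm R)\<^sup>2 / (2 * \<beta>2)" using gap unfolding ffun_def phi_def R_def by simp
  have B4: "ff xp b2p \<le> (1 - \<tau>) * phi xb + \<tau> * phi z + ((1 - \<tau>) * ((norm R)\<^sup>2 / (2 * \<beta>2)) + \<tau> * ((R \<bullet> S) / \<beta>2)
      + \<tau>\<^sup>2 * (norm S)\<^sup>2 / (2 * (1 - \<tau>) * \<beta>2))"
  proof -
    have r: "rr xp = (1 - \<tau>) *\<^sub>R R + \<tau> *\<^sub>R S" unfolding xp_def rr_comb R_def S_def ..
    have n: "(norm (rr xp))\<^sup>2 = (1 - \<tau>)\<^sup>2 * (norm R)\<^sup>2 + 2 * (1 - \<tau>) * \<tau> * (R \<bullet> S) + \<tau>\<^sup>2 * (norm S)\<^sup>2"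
      unfolding r by (rule V3)
    have "1 / (2 * b2p) * (norm (rr xp))\<^sup>2 = (1 - \<tau>) * ((norm R)\<^sup>2 / (2 * \<beta>2)) + \<tau> * ((R \<bullet> S) / \<beta>2)
      + \<tau>\<^sup>2 * (norm S)\<^sup>2 / (2 * (1 - \<tau>) * \<beta>2)"
      unfolding n b2p_def using t0 b2 by (simp add: field_simps power2_eq_square)
    moreover have "phi xp \<le> (1 - \<tau>) * phi xb + \<tau> * phi z" unfolding phi_def xp_def by (rule phi_conv[OF t0(1,2)])
    ultimately show ?thesis unfolding ffun_def phi_def by simp
  qed
  have B5: "\<tau>\<^sup>2 * (norm S)\<^sup>2 / (2 * (1 - \<tau>) * \<beta>2) \<le> (norm S)\<^sup>2 / (2 * L)"
  proof -
    have k: "\<tau>\<^sup>2 * L \<le> (1 - \<tau>) * \<beta>2" using cB b1 unfolding L_eq a1_def a2_def by (simp add: field_simps)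
    have "\<tau>\<^sup>2 / (2 * (1 - \<tau>) * \<beta>2) \<le> 1 / (2 * L)"
      using k t0 b2 Lpos by (simp add: field_simps)
    from mult_right_mono[OF this, of "(norm S)\<^sup>2"] show ?thesis by simp
  qed
  have B6: "(1 - \<tau>) * (phi xb + (norm R)\<^sup>2 / (2 * \<beta>2)) \<le> (1 - \<tau>) * dd yb \<beta>1"
    using B3 t0 by (intro mult_left_mono) auto
  have "xp \<in> X1 \<times> X2 \<and> ff xp b2p \<le> dd yp \<beta>1"
  proof -
    have e1: "(1 - \<tau>) * (phi xb + (norm R)\<^sup>2 / (2 * \<beta>2)) = (1 - \<tau>) * phi xb + (1 - \<tau>) * ((norm R)\<^sup>2 / (2 * \<beta>2))"
      by (rule distrib_left)
    have e2: "\<tau> * (phi z + (R \<bullet> S) / \<beta>2) = \<tau> * phi z + \<tau> * ((R \<bullet> S) / \<beta>2)"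
      by (rule distrib_left)
    show ?thesis using xpX B1 B2 B4 B5 B6 e1 e2 by linarith
  qed
  then show ?thesis unfolding Let_def xp_def yp_def z_def yh_def b2p_def .
qed

end

theorem lemma6:
  fixes X1 :: "(real^'n1) set" and X2 :: "(real^'n2) set"
    and \<phi>1 :: "real^'n1 \<Rightarrow> real" and \<phi>2 :: "real^'n2 \<Rightarrow> real"
    and A1 :: "real^'n1^'m" and A2 :: "real^'n2^'m" and b :: "real^'m"
    and p1 :: "real^'n1 \<Rightarrow> real" and p2 :: "real^'n2 \<Rightarrow> real"
    and \<sigma>1 \<sigma>2 \<beta>1 \<beta>2 \<tau> :: real
    and xb :: "(real^'n1) \<times> (real^'n2)" and yb :: "real^'m"
  assumes X1: "X1 \<noteq> {}" "closed X1" "convex X1" "bounded X1"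
    and X2: "X2 \<noteq> {}" "closed X2" "convex X2" "bounded X2"
    and phi: "convex_on UNIV \<phi>1" "convex_on UNIV \<phi>2"
    and prox: "prox_function X1 \<sigma>1 p1" "prox_function X2 \<sigma>2 p2"
    and A_nz: "A1 \<noteq> 0 \<or> A2 \<noteq> 0"
    and beta: "\<beta>1 > 0" "\<beta>2 > 0"
    and tau: "0 < \<tau>" "\<tau> < 1"
    and xb: "xb \<in> X1 \<times> X2"
    and gap: "ffun \<phi>1 \<phi>2 A1 A2 b xb \<beta>2 \<le> dfun \<phi>1 \<phi>2 A1 A2 b X1 X2 p1 p2 yb \<beta>1"
    and cond: "\<beta>1 * \<beta>2 \<ge> 2 * \<tau>\<^sup>2 / (1 - \<tau>) * max ((opnorm A1)\<^sup>2 / \<sigma>1) ((opnorm A2)\<^sup>2 / \<sigma>2)"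
  shows
    "(let xh = (1 - \<tau>) *\<^sub>R xb + \<tau> *\<^sub>R xstar \<phi>1 \<phi>2 A1 A2 b X1 X2 p1 p2 yb \<beta>1;
          yp = (1 - \<tau>) *\<^sub>R yb + \<tau> *\<^sub>R ystar A1 A2 b xh \<beta>2;
          xp = Pmap \<phi>1 \<phi>2 A1 A2 b X1 X2 xh \<beta>2;
          \<beta>1p = (1 - \<tau>) * \<beta>1
      in xp \<in> X1 \<times> X2 \<and>
         ffun \<phi>1 \<phi>2 A1 A2 b xp \<beta>2 \<le> dfun \<phi>1 \<phi>2 A1 A2 b X1 X2 p1 p2 yp \<beta>1p)
   \<and>
    (let yh = (1 - \<tau>) *\<^sub>R yb + \<tau> *\<^sub>R ystar A1 A2 b xb \<beta>2;
          xp = (1 - \<tau>) *\<^sub>R xb + \<tau> *\<^sub>R xstar \<phi>1 \<phi>2 A1 A2 b X1 X2 p1 p2 yh \<beta>1;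
          yp = Gmap \<phi>1 \<phi>2 A1 A2 b X1 X2 p1 p2 \<sigma>1 \<sigma>2 yh \<beta>1;
          \<beta>2p = (1 - \<tau>) * \<beta>2
      in xp \<in> X1 \<times> X2 \<and>
         ffun \<phi>1 \<phi>2 A1 A2 b xp \<beta>2p \<le> dfun \<phi>1 \<phi>2 A1 A2 b X1 X2 p1 p2 yp \<beta>1)"
proof -
  interpret setting X1 X2 \<phi>1 \<phi>2 A1 A2 b p1 p2 \<sigma>1 \<sigma>2
    by (simp add: setting_def X1 X2 phi prox)
  have t1: "0 < 1 - \<tau>" using tau by simp
  define m where "m = max ((opnorm A1)\<^sup>2 / \<sigma>1) ((opnorm A2)\<^sup>2 / \<sigma>2)"
  have k0: "0 \<le> 2 * \<tau>\<^sup>2 / (1 - \<tau>)" using t1 by simp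
  have cm: "2 * \<tau>\<^sup>2 * m \<le> (1 - \<tau>) * \<beta>1 * \<beta>2"
    using cond t1 unfolding m_def[symmetric] by (simp add: field_simps)
  have m1: "(opnorm A1)\<^sup>2 / \<sigma>1 \<le> m" and m2: "(opnorm A2)\<^sup>2 / \<sigma>2 \<le> m" unfolding m_def by simp_all
  have c1: "2 * \<tau>\<^sup>2 * (opnorm A1)\<^sup>2 \<le> (1 - \<tau>) * \<beta>1 * \<beta>2 * \<sigma>1"
  proof -
    have "2 * \<tau>\<^sup>2 * ((opnorm A1)\<^sup>2 / \<sigma>1) \<le> (1 - \<tau>) * \<beta>1 * \<beta>2"
      using mult_left_mono[OF m1, of "2 * \<tau>\<^sup>2"] cm by simp
    then show ?thesis using sig by (simp add: field_simps)
  qed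
  have c2: "2 * \<tau>\<^sup>2 * (opnorm A2)\<^sup>2 \<le> (1 - \<tau>) * \<beta>1 * \<beta>2 * \<sigma>2"
  proof -
    have "2 * \<tau>\<^sup>2 * ((opnorm A2)\<^sup>2 / \<sigma>2) \<le> (1 - \<tau>) * \<beta>1 * \<beta>2"
      using mult_left_mono[OF m2, of "2 * \<tau>\<^sup>2"] cm by simp
    then show ?thesis using sig by (simp add: field_simps)
  qed
  have cB: "\<tau>\<^sup>2 * ((opnorm A1)\<^sup>2 / \<sigma>1 + (opnorm A2)\<^sup>2 / \<sigma>2) \<le> (1 - \<tau>) * \<beta>1 * \<beta>2"
  proof -
    have "\<tau>\<^sup>2 * ((opnorm A1)\<^sup>2 / \<sigma>1 + (opnorm A2)\<^sup>2 / \<sigma>2) \<le> \<tau>\<^sup>2 * (2 * m)"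
      using m1 m2 by (intro mult_left_mono) auto
    then show ?thesis using cm by simp
  qed
  show ?thesis
    using partA[OF beta tau xb gap c1 c2] partB[OF beta tau xb gap A_nz cB] by (rule conjI)
qed

end
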